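(* Let $\mathbf P$ be a collection of quartiles and let $\mathbf D$ be a collection of quartiles such that the tiles $\{Q_3:Q\in\mathbf D\}$ are pairwise disjoint. Let $\mathbf P':=\{P\in\mathbf P: P_1\le Q_3\text{ for some }Q\in\mathbf D\}$. Then for every pair $P\in\mathbf P$, $Q\in\mathbf D$ with $P_1\cap Q_3\ne\emptyset$ we have $\omega_{Q_3}\subseteq\omega_{P_1}$ if and only if $P\in\mathbf P'$.
   Context: A tile is a rectangle $I\times\omega$ of area one with $I,\omega$ dyadic intervals. A quartile is $P=I_P\times\omega_P=[2^{-k}n,2^{-k}(n+1))\times[2^{k+2}l,2^{k+2}(l+1))$ ($k,n\in\mathbb Z$, $l\ge0$ integers) with sub-tiles $P_i:=I_P\times[2^k(4l+i-1),2^k(4l+i))$, $i=1,2,3$; $\omega_{P_i}$ denotes the frequency interval of $P_i$. For tiles $P,P'$ write $P'<P$ if $I_{P'}\subsetneq I_P$ and $\omega_P\subseteq\omega_{P'}$, and $P'\le P$ if $P'<P$ or $P'=P$. *)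

theory Defs
  imports Complex_Main
begin

definition dint :: "int \<Rightarrow> int \<Rightarrow> real set" where
  "dint j m = {real_of_int m * 2 powr real_of_int j ..< real_of_int (m + 1) * 2 powr real_of_int j}"

text \<open>A tile is a pair (I, omega) of (dyadic) intervals; its point set is I \<times> omega.\<close>
type_synonym tile = "real set \<times> real set"

definition tile_set :: "tile \<Rightarrow> (real \<times> real) set" where
  "tile_set P = fst P \<times> snd P"

definition tile_less :: "tile \<Rightarrow> tile \<Rightarrow> bool" (infix "\<lless>" 50) where
  "P' \<lless> P \<longleftrightarrow> fst P' \<subset> fst P \<and> snd P \<subseteq> snd P'"

definition tile_le :: "tile \<Rightarrow> tile \<Rightarrow> bool" (infix "\<lless>=" 50) where
  "P' \<lless>= P \<longleftrightarrow> P' \<lless> P \<or> P' = P"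

text \<open>A quartile is given by its parameters (k, n, l), with l \<ge> 0:
  I_P = [2^{-k} n, 2^{-k}(n+1)), omega_P = [2^{k+2} l, 2^{k+2}(l+1)).\<close>
type_synonym quartile = "int \<times> int \<times> nat"

definition qI :: "quartile \<Rightarrow> real set" where
  "qI P = (case P of (k, n, l) \<Rightarrow> dint (- k) n)"

definition q\<omega> :: "quartile \<Rightarrow> real set" where
  "q\<omega> P = (case P of (k, n, l) \<Rightarrow> dint (k + 2) (int l))"

definition subtile :: "quartile \<Rightarrow> int \<Rightarrow> tile" where
  "subtile P i = (case P of (k, n, l) \<Rightarrow> (dint (- k) n, dint k (4 * int l + i - 1)))"

end

theory Submission imports Defs begin

lemma dint_ne: "dint j m \<noteq> {}"
  unfolding dint_def by (simp add: algebra_simps)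

lemma pow_split:
  assumes "j \<le> j'"
  shows "2 powr real_of_int j' = 2 powr real_of_int j * real_of_int (2 ^ nat (j' - j))"
proof -
  have "2 powr real_of_int j' = 2 powr (real_of_int j + real_of_int (j' - j))" by simp
  also have "\<dots> = 2 powr real_of_int j * 2 powr real_of_int (j' - j)" by (rule powr_add)
  also have "2 powr real_of_int (j' - j) = 2 powr real (nat (j' - j))" using assms by simp
  also have "\<dots> = 2 ^ nat (j' - j)" by (simp add: powr_realpow)
  finally show ?thesis by simp
qed

lemma dint_nest:
  assumes "j \<le> j'" "dint j m \<inter> dint j' m' \<noteq> {}"
  shows "dint j m \<subseteq> dint j' m'"
proof -
  define a where "a = 2 powr real_of_int j"
  define D :: int where "D = 2 ^ nat (j' - j)"
  have a0: "a > 0" unfolding a_def by simp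
  have pj: "2 powr real_of_int j' = a * D" unfolding a_def D_def using pow_split[OF assms(1)] by simp
  obtain x where x: "x \<in> dint j m" "x \<in> dint j' m'" using assms(2) by blast
  have h1: "m * a \<le> x" "x < (m+1) * a" using x(1) unfolding dint_def a_def by auto
  have h2: "m' * D * a \<le> x" "x < (m'+1) * D * a" using x(2) unfolding dint_def pj
    by (auto simp: algebra_simps)
  have "real_of_int (m' * D) < real_of_int (m+1)"
    using h1 h2 a0 by (smt (verit) mult_strict_right_mono of_int_mult mult_right_mono of_int_add of_int_1)
  hence i1: "m' * D \<le> m" by linarith
  have "real_of_int m < real_of_int ((m'+1) * D)"
    using h1 h2 a0 by (smt (verit) mult_strict_right_mono of_int_mult mult_right_mono of_int_add of_int_1)
  hence i2: "m + 1 \<le> (m'+1) * D" by linarith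
  have i1': "real_of_int (m' * D) \<le> real_of_int m" by (simp only: of_int_le_iff i1)
  have i2': "real_of_int (m + 1) \<le> real_of_int ((m'+1) * D)" by (simp only: of_int_le_iff i2)
  have r1: "real_of_int (m' * D) * a \<le> m * a" using i1' a0 by (intro mult_right_mono) auto
  have r2: "real_of_int (m + 1) * a \<le> real_of_int ((m'+1) * D) * a" using i2' a0 by (intro mult_right_mono) auto
  show ?thesis
  proof
    fix z assume "z \<in> dint j m"
    hence "m * a \<le> z" "z < (m+1) * a" unfolding dint_def a_def by auto
    moreover have "real_of_int m' * (a * D) = real_of_int (m' * D) * a"
      "real_of_int (m'+1) * (a * D) = real_of_int ((m' + 1) * D) * a" by simp_all
    ultimately have "real_of_int m' * (a * D) \<le> z" "z < real_of_int (m'+1) * (a * D)" using r1 r2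
      by linarith+
    thus "z \<in> dint j' m'" unfolding dint_def pj by simp
  qed
qed

lemma dint_eq:
  assumes "dint j m = dint j' m'" shows "j = j' \<and> m = m'"
proof -
  have "real_of_int m * 2 powr real_of_int j = real_of_int m' * 2 powr real_of_int j'"
       "real_of_int (m+1) * 2 powr real_of_int j = real_of_int (m'+1) * 2 powr real_of_int j'"
    using assms dint_ne[of j m] unfolding dint_def by (simp_all add: atLeastLessThan_eq_iff)
  hence e: "2 powr real_of_int j = 2 powr real_of_int j'" by (simp add: algebra_simps)
  hence "j = j'" using powr_inj[of 2 "real_of_int j" "real_of_int j'"] by simp
  thus ?thesis using e \<open>real_of_int m * _ = _\<close> by simp
qed

lemma dint_sub_le:
  assumes "dint j m \<subseteq> dint j' m'" shows "j \<le> j'"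
proof (rule ccontr)
  assume "\<not> j \<le> j'"
  hence "j' \<le> j" by simp
  moreover have "dint j' m' \<inter> dint j m \<noteq> {}" using assms dint_ne[of j m] by blast
  ultimately have "dint j' m' \<subseteq> dint j m" by (rule dint_nest)
  hence "dint j m = dint j' m'" using assms by blast
  with dint_eq \<open>\<not> j \<le> j'\<close> show False by blast
qed

lemma cmp:
  assumes "dint (-k1) a1 \<inter> dint (-k2) a2 \<noteq> {}" "dint k1 b1 \<inter> dint k2 b2 \<noteq> {}" "k1 \<le> k2"
  shows "dint k1 b1 \<subseteq> dint k2 b2 \<and> dint (-k2) a2 \<subseteq> dint (-k1) a1"
proof
  show "dint k1 b1 \<subseteq> dint k2 b2" using dint_nest assms(2,3) by blast
  have "dint (-k2) a2 \<inter> dint (-k1) a1 \<noteq> {}" using assms(1) by blast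
  thus "dint (-k2) a2 \<subseteq> dint (-k1) a1" using dint_nest assms(3) by simp
qed

lemma tile_meet:
  assumes "tile_set (A, B) \<inter> tile_set (C, E) \<noteq> {}"
  shows "A \<inter> C \<noteq> {}" "B \<inter> E \<noteq> {}"
  using assms unfolding tile_set_def by auto

theorem lemma6p1:
  fixes \<P> \<D> :: "quartile set"
  assumes disj: "\<forall>Q\<in>\<D>. \<forall>Q'\<in>\<D>. subtile Q 3 \<noteq> subtile Q' 3 \<longrightarrow>
                   tile_set (subtile Q 3) \<inter> tile_set (subtile Q' 3) = {}"
  defines "\<P>' \<equiv> {P \<in> \<P>. \<exists>Q\<in>\<D>. subtile P 1 \<lless>= subtile Q 3}"
  shows "\<forall>P\<in>\<P>. \<forall>Q\<in>\<D>. tile_set (subtile P 1) \<inter> tile_set (subtile Q 3) \<noteq> {} \<longrightarrow>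
           (snd (subtile Q 3) \<subseteq> snd (subtile P 1) \<longleftrightarrow> P \<in> \<P>')"
proof (intro ballI impI)
  fix P Q assume PP: "P \<in> \<P>" and QD: "Q \<in> \<D>"
    and meet: "tile_set (subtile P 1) \<inter> tile_set (subtile Q 3) \<noteq> {}"
  obtain k n l where P: "P = (k, n, l)" by (cases P) auto
  obtain k' n' l' where Q: "Q = (k', n', l')" by (cases Q) auto
  define b where "b = 4 * int l + 1 - 1"
  define b' where "b' = 4 * int l' + 3 - 1"
  have sP: "subtile P 1 = (dint (-k) n, dint k b)" unfolding P subtile_def b_def by simp
  have sQ: "subtile Q 3 = (dint (-k') n', dint k' b')" unfolding Q subtile_def b'_def by simp
  have mI: "dint (-k) n \<inter> dint (-k') n' \<noteq> {}" and mW: "dint k b \<inter> dint k' b' \<noteq> {}"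
    using tile_meet meet unfolding sP sQ by blast+
  show "snd (subtile Q 3) \<subseteq> snd (subtile P 1) \<longleftrightarrow> P \<in> \<P>'"
  proof
    assume "snd (subtile Q 3) \<subseteq> snd (subtile P 1)"
    hence sub: "dint k' b' \<subseteq> dint k b" unfolding sP sQ by simp
    hence kk: "k' \<le> k" by (rule dint_sub_le)
    have mI': "dint (-k') n' \<inter> dint (-k) n \<noteq> {}" "dint k' b' \<inter> dint k b \<noteq> {}" using mI mW by blast+
    have Isub: "dint (-k) n \<subseteq> dint (-k') n'" using cmp[OF mI'(1) mI'(2) kk] by simp
    have "subtile P 1 \<lless>= subtile Q 3"
    proof (cases "dint (-k) n = dint (-k') n'")
      case True
      hence "-k = -k'" by (rule dint_eq[THEN conjunct1])
      hence "k = k'" by simp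
      hence "dint k b \<subseteq> dint k' b'" using cmp[OF mI mW] by simp
      hence "subtile P 1 = subtile Q 3" using True sub unfolding sP sQ by auto
      thus ?thesis unfolding tile_le_def by simp
    next
      case False
      thus ?thesis using Isub sub unfolding tile_le_def tile_less_def sP sQ by auto
    qed
    thus "P \<in> \<P>'" using PP QD unfolding \<P>'_def by blast
  next
    assume "P \<in> \<P>'"
    then obtain R where RD: "R \<in> \<D>" and le: "subtile P 1 \<lless>= subtile R 3" unfolding \<P>'_def by blast
    obtain k2 n2 l2 where R: "R = (k2, n2, l2)" by (cases R) auto
    define b2 where "b2 = 4 * int l2 + 3 - 1"
    have sR: "subtile R 3 = (dint (-k2) n2, dint k2 b2)" unfolding R subtile_def b2_def by simp
    have RI: "dint (-k) n \<subseteq> dint (-k2) n2" and RW: "dint k2 b2 \<subseteq> dint k b"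
      using le unfolding tile_le_def tile_less_def sP sR by auto
    show "snd (subtile Q 3) \<subseteq> snd (subtile P 1)"
    proof (rule ccontr)
      assume nsub: "\<not> ?thesis"
      hence ns: "\<not> dint k' b' \<subseteq> dint k b" unfolding sP sQ by simp
      have "\<not> k' \<le> k"
      proof
        assume "k' \<le> k"
        moreover have "dint (-k') n' \<inter> dint (-k) n \<noteq> {}" "dint k' b' \<inter> dint k b \<noteq> {}" using mI mW by blast+
        ultimately show False using cmp ns by blast
      qed
      hence "k \<le> k'" by simp
      from cmp[OF mI mW this] have W1: "dint k b \<subseteq> dint k' b'" and I1: "dint (-k') n' \<subseteq> dint (-k) n" by auto
      have "tile_set (dint (-k') n', dint k2 b2) \<noteq> {}" unfolding tile_set_def using dint_ne by auto
      moreover have "tile_set (dint (-k') n', dint k2 b2) \<subseteq> tile_set (subtile Q 3) \<inter> tile_set (subtile R 3)"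
        unfolding tile_set_def sQ sR using W1 I1 RI RW by auto
      ultimately have "subtile Q 3 = subtile R 3" using disj QD RD by blast
      hence "dint k' b' = dint k2 b2" unfolding sQ sR by simp
      thus False using ns RW by simp
    qed
  qed
qed

end
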